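(* Let $h\in\mathbb{R}^{2n-1}$ be the impulse response with $h_t=1$ for all $t=1,\dots,2n-1$ (a system of order $1$), and let $\mathcal{H}:\mathbb{R}^{2n-1}\to\mathbb{R}^{n\times n}$ be the Hankel map. Consider the set $$S=\Big\{x/\|x\|_2\ :\ x\in\mathbb{R}^{2n-1}\setminus\{0\},\ \|\mathcal{H}(h+x)\|_*\le\|\mathcal{H}(h)\|_*\Big\}.$$ Then the Gaussian width of $S$ is lower bounded by $Cn^{1/6}$ for some constant $C>0$.
   Context: The Hankel map sends $x=(x_1,\dots,x_{2n-1})$ to the $n\times n$ matrix with $(j,k)$ entry $x_{j+k-1}$. $\|\cdot\|_*$ is the nuclear norm. The Gaussian width of a set $S\subset\mathbb{R}^{2n-1}$ is $w(S)=\mathbb{E}_g\sup_{\gamma\in S}\gamma^\top g$, where $g$ is a standard Gaussian vector in $\mathbb{R}^{2n-1}$. *)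

theory Defs
  imports "HOL-Probability.Probability" "Jordan_Normal_Form.Char_Poly"
begin

text \<open>Vectors in R^m are represented as functions nat => real, with coordinates
  indexed 0..m-1 (coordinate i here is coordinate i+1 of the paper).\<close>

definition hankel :: "nat \<Rightarrow> (nat \<Rightarrow> real) \<Rightarrow> real mat" where
  "hankel n x = mat n n (\<lambda>(j,k). x (j + k))"

text \<open>Nuclear norm = sum of the singular values, the singular values being the square
  roots of the eigenvalues (with algebraic multiplicity) of A^T A.\<close>
definition nuclear_norm :: "real mat \<Rightarrow> real" where
  "nuclear_norm A =
     (let p = char_poly (transpose_mat A * A)
      in \<Sum>e\<in>{e. poly p e = 0}. real (order e p) * sqrt e)"

definition euclid_norm :: "nat \<Rightarrow> (nat \<Rightarrow> real) \<Rightarrow> real" where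
  "euclid_norm m x = sqrt (\<Sum>i<m. (x i)\<^sup>2)"

definition gauss_measure :: "nat \<Rightarrow> (nat \<Rightarrow> real) measure" where
  "gauss_measure m = PiM {..<m} (\<lambda>_. density lborel std_normal_density)"

definition gaussian_width :: "nat \<Rightarrow> (nat \<Rightarrow> real) set \<Rightarrow> real" where
  "gaussian_width m S =
     integral\<^sup>L (gauss_measure m) (\<lambda>g. SUP \<gamma>\<in>S. \<Sum>i<m. \<gamma> i * g i)"

definition ones_impulse :: "nat \<Rightarrow> nat \<Rightarrow> real" where
  "ones_impulse n = (\<lambda>i. if i < 2*n - 1 then 1 else 0)"

definition descent_set :: "nat \<Rightarrow> (nat \<Rightarrow> real) set" where
  "descent_set n =
     {(\<lambda>i. x i / euclid_norm (2*n - 1) x) | x.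
        (\<forall>i\<ge>2*n - 1. x i = 0) \<and> x \<noteq> (\<lambda>_. 0) \<and>
        nuclear_norm (hankel n (\<lambda>i. ones_impulse n i + x i))
          \<le> nuclear_norm (hankel n (ones_impulse n))}"

end

theory Submission
  imports Defs
begin

lemma mult_entry:
  assumes "A \<in> carrier_mat n k" "B \<in> carrier_mat k m" "i < n" "j < m"
  shows "(A * B) $$ (i,j) = (\<Sum>l<k. A $$ (i,l) * B $$ (l,j))"
  using assms by (auto simp: scalar_prod_def lessThan_atLeast0 intro!: sum.cong)

lemma cp_const:
  fixes a :: real
  assumes n: "n \<ge> 1"
  shows "char_poly (mat n n (\<lambda>_. a)) = [:-(a * n), 1:] * [:0,1:]^(n-1)"
proof -
  define K where "K = (mat n n (\<lambda>_. a) :: real mat)"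
  define U where "U = (mat n n (\<lambda>(i,j). if j = 0 \<and> i \<noteq> 0 then 1 else 0) :: real mat)"
  define P where "P = 1\<^sub>m n + U"
  define Q where "Q = 1\<^sub>m n - U"
  define T where "T = (mat n n (\<lambda>(i,j). if i = 0 then (if j = 0 then a * n else a) else 0) :: real mat)"
  have C: "K \<in> carrier_mat n n" "U \<in> carrier_mat n n" "T \<in> carrier_mat n n"
    unfolding K_def U_def T_def by auto
  have CP: "P \<in> carrier_mat n n" "Q \<in> carrier_mat n n" using C unfolding P_def Q_def by auto
  have UU: "U * U = 0\<^sub>m n n"
  proof (rule eq_matI)
    fix i j assume ij: "i < dim_row (0\<^sub>m n n)" "j < dim_col (0\<^sub>m n n)"
    hence ij': "i < n" "j < n" by auto
    have "(U * U) $$ (i,j) = (\<Sum>l<n. U $$ (i,l) * U $$ (l,j))" by (rule mult_entry[OF C(2,2) ij'])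
    also have "\<dots> = 0"
      by (rule sum.neutral, use ij' in \<open>auto simp: U_def\<close>)
    finally show "(U * U) $$ (i,j) = 0\<^sub>m n n $$ (i,j)" using ij' by simp
  qed (use C in auto)
  have PQ: "P * Q = 1\<^sub>m n"
  proof -
    have "P * Q = 1\<^sub>m n * (1\<^sub>m n - U) + U * (1\<^sub>m n - U)"
      unfolding P_def Q_def using C by (intro add_mult_distrib_mat) auto
    also have "\<dots> = (1\<^sub>m n - U) + (U * 1\<^sub>m n - U * U)"
      using C by (subst mult_minus_distrib_mat[of U n n]) auto
    also have "\<dots> = 1\<^sub>m n" unfolding UU using C by (intro eq_matI) auto
    finally show ?thesis .
  qed
  have QP: "Q * P = 1\<^sub>m n"
  proof -
    have "Q * P = 1\<^sub>m n * (1\<^sub>m n + U) - U * (1\<^sub>m n + U)"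
      unfolding P_def Q_def using C by (intro minus_mult_distrib_mat) auto
    also have "\<dots> = (1\<^sub>m n + U) - (U * 1\<^sub>m n + U * U)"
      using C by (subst mult_add_distrib_mat[of U n n]) auto
    also have "\<dots> = 1\<^sub>m n" unfolding UU using C by (intro eq_matI) auto
    finally show ?thesis .
  qed
  have KP: "K * P = P * T"
  proof (rule eq_matI)
    fix i j assume ij: "i < dim_row (P * T)" "j < dim_col (P * T)"
    hence ij': "i < n" "j < n" using C CP by auto
    have "(K * P) $$ (i,j) = (\<Sum>l<n. K $$ (i,l) * P $$ (l,j))" by (rule mult_entry[OF C(1) CP(1) ij'])
    also have "\<dots> = (\<Sum>l<n. a * (if j = 0 \<or> l = j then 1 else 0))"
      by (rule sum.cong, use ij' C in \<open>auto simp: K_def P_def U_def\<close>)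
    also have "\<dots> = (if j = 0 then a * n else a)"
    proof (cases "j = 0")
      case True then show ?thesis by simp
    next
      case False
      then have "(\<Sum>l<n. a * (if j = 0 \<or> l = j then 1 else 0)) = (\<Sum>l<n. if l = j then a else 0)"
        by (intro sum.cong) auto
      then show ?thesis using False ij' by simp
    qed
    also have "\<dots> = (\<Sum>l<n. if l = 0 then P $$ (i,l) * T $$ (l,j) else 0)"
      using ij' n C by (simp add: P_def T_def U_def)
    also have "\<dots> = (\<Sum>l<n. P $$ (i,l) * T $$ (l,j))"
      by (rule sum.cong, use ij' in \<open>auto simp: T_def\<close>)
    also have "\<dots> = (P * T) $$ (i,j)" by (rule mult_entry[OF CP(1) C(3) ij', symmetric])
    finally show "(K * P) $$ (i,j) = (P * T) $$ (i,j)" .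
  qed (use C CP in auto)
  have KPTQ: "K = P * T * Q"
  proof -
    have "K = K * (P * Q)" using C by (simp add: PQ)
    also have "\<dots> = (K * P) * Q" using C CP by (simp add: assoc_mult_mat)
    finally show ?thesis using KP by simp
  qed
  have sim: "similar_mat K T"
    unfolding similar_mat_def similar_mat_wit_def Let_def
    using C CP PQ QP KPTQ by (intro exI[of _ P] exI[of _ Q]) auto
  have ut: "upper_triangular T" unfolding upper_triangular_def T_def by auto
  have diag: "diag_mat T = (a * n) # replicate (n - 1) 0"
  proof -
    obtain n' where n': "n = Suc n'" using n by (cases n) auto
    show ?thesis unfolding diag_mat_def list_eq_iff_nth_eq
      using n' by (auto simp del: upt_Suc simp: T_def nth_Cons split: nat.splits)
  qed
  have "char_poly K = char_poly T" by (rule char_poly_similar[OF sim])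
  also have "\<dots> = (\<Prod>x\<leftarrow>diag_mat T. [:- x, 1:])" by (rule char_poly_upper_triangular[OF C(3) ut])
  also have "\<dots> = [:-(a * n), 1:] * [:0,1:]^(n-1)" unfolding diag by (simp add: prod_list_replicate)
  finally show ?thesis unfolding K_def .
qed

lemma hankel_ones: "hankel n (ones_impulse n) = mat n n (\<lambda>_. 1)"
  unfolding hankel_def ones_impulse_def by (intro eq_matI) auto

lemma nn_ones:
  assumes n: "n \<ge> 2"
  shows "nuclear_norm (hankel n (ones_impulse n)) = real n"
proof -
  define X :: "real poly" where "X = [:0,1:]"
  have TT: "transpose_mat (mat n n (\<lambda>_. 1)) * mat n n (\<lambda>_. 1) = (mat n n (\<lambda>_. real n) :: real mat)"
  proof (rule eq_matI)
    fix i j assume "i < dim_row (mat n n (\<lambda>_. real n) :: real mat)" "j < dim_col (mat n n (\<lambda>_. real n) :: real mat)"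
    hence ij: "i < n" "j < n" by auto
    have "(transpose_mat (mat n n (\<lambda>_. 1)) * mat n n (\<lambda>_. 1)) $$ (i,j) = (\<Sum>l<n. (transpose_mat (mat n n (\<lambda>_. 1)) :: real mat) $$ (i,l) * mat n n (\<lambda>_. 1) $$ (l,j))"
      by (rule mult_entry[OF _ _ ij]) auto
    also have "\<dots> = (\<Sum>l<n. 1)" by (rule sum.cong) (use ij in auto)
    finally show "(transpose_mat (mat n n (\<lambda>_. 1)) * mat n n (\<lambda>_. 1)) $$ (i,j) = (mat n n (\<lambda>_. real n) :: real mat) $$ (i,j)"
      using ij by simp
  qed auto
  define p where "p = [:-(real n * real n), 1:] * X^(n-1)"
  have cp: "char_poly (transpose_mat (hankel n (ones_impulse n)) * hankel n (ones_impulse n)) = p"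
    unfolding hankel_ones TT p_def X_def using n by (subst cp_const) auto
  have p0: "p \<noteq> 0" unfolding p_def X_def by (intro no_zero_divisors power_not_zero) auto
  have roots: "{e. poly p e = 0} = {real n * real n, 0}"
    using n unfolding p_def X_def by auto
  have o1: "order (real n * real n) p = 1"
  proof -
    have "order (real n * real n) p = order (real n * real n) [:-(real n * real n), 1:] + order (real n * real n) (X^(n-1))"
      unfolding p_def by (rule order_mult) (use p0 p_def in auto)
    also have "order (real n * real n) [:-(real n * real n), 1:] = 1"
      using order_power_n_n[of "real n * real n" 1] by simp
    also have "order (real n * real n) (X^(n-1)) = 0"
      by (rule order_0I) (use n in \<open>auto simp: X_def\<close>)
    finally show ?thesis by simp
  qed
  have ne: "real n * real n \<noteq> 0" using n by auto
  show ?thesis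
    unfolding nuclear_norm_def Let_def cp roots using ne o1 by (simp add: real_sqrt_mult)
qed

lemma eig_bound:
  fixes M :: "real mat"
  assumes M: "M \<in> carrier_mat n n"
    and rows: "\<And>i. i < n \<Longrightarrow> (\<Sum>j<n. \<bar>M $$ (i,j)\<bar>) \<le> R"
    and root: "poly (char_poly M) e = 0"
  shows "\<bar>e\<bar> \<le> R"
proof -
  have "eigenvalue M e" using eigenvalue_root_char_poly[OF M] root by simp
  then obtain v where v: "v \<in> carrier_vec n" "v \<noteq> 0\<^sub>v n" "M *\<^sub>v v = e \<cdot>\<^sub>v v"
    unfolding eigenvalue_def eigenvector_def using M by auto
  have nz: "\<exists>i<n. v $ i \<noteq> 0"
  proof (rule ccontr)
    assume "\<not> ?thesis"
    hence "v = 0\<^sub>v n" using v(1) by (intro eq_vecI) auto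
    with v(2) show False by simp
  qed
  then have n0: "n > 0" by auto
  define mu where "mu = Max ((\<lambda>i. \<bar>v $ i\<bar>) ` {..<n})"
  have fin: "finite ((\<lambda>i. \<bar>v $ i\<bar>) ` {..<n})" "(\<lambda>i. \<bar>v $ i\<bar>) ` {..<n} \<noteq> {}" using n0 by auto
  obtain i0 where i0: "i0 < n" "\<bar>v $ i0\<bar> = mu"
    using Max_in[OF fin] unfolding mu_def by auto
  have le: "\<bar>v $ j\<bar> \<le> mu" if "j < n" for j
    unfolding mu_def using that fin by (intro Max_ge) auto
  have mupos: "mu > 0"
  proof -
    obtain j where "j < n" "v $ j \<noteq> 0" using nz by auto
    with le[of j] show ?thesis by auto
  qed
  have "e * v $ i0 = (M *\<^sub>v v) $ i0" using v(3) v(1) i0 by simp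
  also have "\<dots> = (\<Sum>j<n. M $$ (i0,j) * v $ j)"
    using M v(1) i0 by (auto simp: scalar_prod_def lessThan_atLeast0 intro!: sum.cong)
  finally have eq: "e * v $ i0 = (\<Sum>j<n. M $$ (i0,j) * v $ j)" .
  have "\<bar>e\<bar> * mu = \<bar>e * v $ i0\<bar>" using i0 by (simp add: abs_mult)
  also have "\<dots> \<le> (\<Sum>j<n. \<bar>M $$ (i0,j) * v $ j\<bar>)" unfolding eq by (rule sum_abs)
  also have "\<dots> \<le> (\<Sum>j<n. \<bar>M $$ (i0,j)\<bar> * mu)"
    by (intro sum_mono) (auto simp: abs_mult intro!: mult_left_mono le)
  also have "\<dots> = (\<Sum>j<n. \<bar>M $$ (i0,j)\<bar>) * mu" by (simp add: sum_distrib_right)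
  also have "\<dots> \<le> R * mu" using rows[OF i0(1)] mupos by (intro mult_right_mono) auto
  finally show ?thesis using mupos by simp
qed


lemma cp_zero: "char_poly (0\<^sub>m k k :: real mat) = [:0,1:]^k"
proof -
  have "char_poly (0\<^sub>m k k :: real mat) = (\<Prod>x\<leftarrow>diag_mat (0\<^sub>m k k :: real mat). [:- x, 1:])"
    by (rule char_poly_upper_triangular[of _ k]) (auto simp: upper_triangular_def)
  also have "diag_mat (0\<^sub>m k k :: real mat) = replicate k 0"
    unfolding diag_mat_def list_eq_iff_nth_eq by auto
  finally show ?thesis by (simp add: prod_list_replicate)
qed

lemma nn_upper:
  fixes y :: "nat \<Rightarrow> real"
  assumes dn: "d \<le> n" and yz: "\<And>i. i \<ge> d \<Longrightarrow> y i = 0" and yb: "\<And>i. \<bar>y i\<bar> \<le> b"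
  shows "nuclear_norm (hankel n y) \<le> real d * real d * b"
proof -
  have b0: "b \<ge> 0" using yb[of 0] by auto
  define A where "A = hankel n y"
  define M where "M = transpose_mat A * A"
  have A: "A \<in> carrier_mat n n" unfolding A_def hankel_def by auto
  have MC: "M \<in> carrier_mat n n" unfolding M_def using A by auto
  have Ment: "M $$ (i,j) = (\<Sum>k<n. y (k+i) * y (k+j))" if "i < n" "j < n" for i j
  proof -
    have "M $$ (i,j) = (\<Sum>l<n. transpose_mat A $$ (i,l) * A $$ (l,j))"
      unfolding M_def by (rule mult_entry[OF _ A that]) (use A in auto)
    also have "\<dots> = (\<Sum>k<n. y (k+i) * y (k+j))"
      by (rule sum.cong) (use that A in \<open>auto simp: A_def hankel_def add.commute\<close>)
    finally show ?thesis .
  qed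
  have Mz: "M $$ (i,j) = 0" if "i < n" "j < n" "d \<le> i \<or> d \<le> j" for i j
    unfolding Ment[OF that(1,2)] by (rule sum.neutral) (use that yz in auto)
  have Mb: "\<bar>M $$ (i,j)\<bar> \<le> real d * b^2" if "i < n" "j < n" for i j
  proof -
    have "\<bar>M $$ (i,j)\<bar> \<le> (\<Sum>k<n. \<bar>y (k+i) * y (k+j)\<bar>)" unfolding Ment[OF that] by (rule sum_abs)
    also have "\<dots> = (\<Sum>k<d. \<bar>y (k+i) * y (k+j)\<bar>)"
      by (rule sum.mono_neutral_right) (use dn yz in auto)
    also have "\<dots> \<le> (\<Sum>k<d. b^2)"
      by (intro sum_mono) (auto simp: abs_mult power2_eq_square intro!: mult_mono yb b0)
    finally show ?thesis by simp
  qed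
  have rows: "(\<Sum>j<n. \<bar>M $$ (i,j)\<bar>) \<le> real d * (real d * b^2)" if "i < n" for i
  proof -
    have "(\<Sum>j<n. \<bar>M $$ (i,j)\<bar>) = (\<Sum>j<d. \<bar>M $$ (i,j)\<bar>)"
      by (rule sum.mono_neutral_right) (use dn that Mz in auto)
    also have "\<dots> \<le> (\<Sum>j<d. real d * b^2)"
      by (intro sum_mono Mb) (use that dn in auto)
    finally show ?thesis by simp
  qed
  define M' where "M' = mat d d (\<lambda>(i,j). M $$ (i,j))"
  define Z where "Z = (0\<^sub>m (n-d) (n-d) :: real mat)"
  have M'C: "M' \<in> carrier_mat d d" unfolding M'_def by auto
  have Mblock: "M = four_block_mat M' (0\<^sub>m d (n-d)) (0\<^sub>m (n-d) d) Z"
  proof (rule eq_matI)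
    fix i j assume "i < dim_row (four_block_mat M' (0\<^sub>m d (n-d)) (0\<^sub>m (n-d) d) Z)"
      "j < dim_col (four_block_mat M' (0\<^sub>m d (n-d)) (0\<^sub>m (n-d) d) Z)"
    hence ij: "i < n" "j < n" using dn by (auto simp: M'_def Z_def)
    show "M $$ (i,j) = four_block_mat M' (0\<^sub>m d (n-d)) (0\<^sub>m (n-d) d) Z $$ (i,j)"
    proof (cases "i < d \<and> j < d")
      case True then show ?thesis using ij by (simp add: M'_def Z_def)
    next
      case False
      then have "M $$ (i,j) = 0" using Mz[OF ij] by auto
      then show ?thesis using ij False dn by (auto simp: M'_def Z_def)
    qed
  qed (use MC dn in \<open>auto simp: M'_def Z_def\<close>)
  have cpm: "char_poly_matrix M = four_block_mat (char_poly_matrix M') (0\<^sub>m d (n-d)) (0\<^sub>m (n-d) d) (char_poly_matrix Z)"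
  proof (rule eq_matI)
    fix i j assume "i < dim_row (four_block_mat (char_poly_matrix M') (0\<^sub>m d (n-d)) (0\<^sub>m (n-d) d) (char_poly_matrix Z))"
      "j < dim_col (four_block_mat (char_poly_matrix M') (0\<^sub>m d (n-d)) (0\<^sub>m (n-d) d) (char_poly_matrix Z))"
    hence ij: "i < n" "j < n" using dn M'C by (auto simp: Z_def char_poly_matrix_def)
    have Mij: "M $$ (i,j) = (if i < d \<and> j < d then M' $$ (i,j) else 0)"
      using Mz[OF ij] ij by (auto simp: M'_def)
    show "char_poly_matrix M $$ (i,j) = four_block_mat (char_poly_matrix M') (0\<^sub>m d (n-d)) (0\<^sub>m (n-d) d) (char_poly_matrix Z) $$ (i,j)"
      using ij dn MC M'C Mij by (auto simp: char_poly_matrix_def Z_def)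
  qed (use MC dn M'C in \<open>auto simp: Z_def char_poly_matrix_def\<close>)
  define X :: "real poly" where "X = [:0,1:]"
  define q where "q = char_poly M'"
  have cpM: "char_poly M = q * X^(n-d)"
  proof -
    have "char_poly M = det (char_poly_matrix M') * det (char_poly_matrix Z)"
      unfolding char_poly_def cpm
      by (rule det_four_block_mat_lower_left_zero) (auto simp: M'C Z_def)
    also have "\<dots> = q * X^(n-d)" unfolding q_def X_def Z_def char_poly_def[symmetric] cp_zero ..
    finally show ?thesis .
  qed
  have q0: "q \<noteq> 0" using degree_monic_char_poly[OF M'C] unfolding q_def by auto
  define p where "p = q * X^(n-d)"
  have p0: "p \<noteq> 0" unfolding p_def X_def using q0 by (intro no_zero_divisors power_not_zero) auto
  have finp: "finite {e. poly p e = 0}" by (rule poly_roots_finite[OF p0])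
  have trm: "real (order e p) * sqrt e \<le> real (order e q) * (real d * b)" if e: "poly p e = 0" for e
  proof (cases "e = 0")
    case True then show ?thesis using b0 by simp
  next
    case False
    have "order e p = order e q + order e (X^(n-d))" unfolding p_def by (rule order_mult) (use p0 p_def in auto)
    also have "order e (X^(n-d)) = 0" by (rule order_0I) (use False in \<open>auto simp: X_def\<close>)
    finally have oe: "order e p = order e q" by simp
    have "\<bar>e\<bar> \<le> real d * (real d * b^2)"
      by (rule eig_bound[OF MC rows]) (use e cpM p_def in auto)
    hence "sqrt \<bar>e\<bar> \<le> sqrt ((real d * b)^2)" by (simp add: power2_eq_square mult_ac)
    hence "sqrt \<bar>e\<bar> \<le> real d * b" using b0 by simp
    moreover have "sqrt e \<le> sqrt \<bar>e\<bar>" by simp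
    ultimately have "sqrt e \<le> real d * b" by linarith
    then show ?thesis unfolding oe by (intro mult_left_mono) auto
  qed
  have "nuclear_norm (hankel n y) = (\<Sum>e\<in>{e. poly p e = 0}. real (order e p) * sqrt e)"
    unfolding nuclear_norm_def Let_def A_def[symmetric] M_def[symmetric] cpM p_def ..
  also have "\<dots> \<le> (\<Sum>e\<in>{e. poly p e = 0}. real (order e q) * (real d * b))"
    by (intro sum_mono trm) auto
  also have "\<dots> = (\<Sum>e\<in>{e. poly q e = 0}. real (order e q)) * (real d * b)"
  proof -
    have "(\<Sum>e\<in>{e. poly p e = 0}. real (order e q)) = (\<Sum>e\<in>{e. poly q e = 0}. real (order e q))"
      by (rule sum.mono_neutral_right[OF finp]) (auto simp: p_def order_0I)
    then show ?thesis by (metis (no_types) sum_distrib_right)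
  qed
  also have "\<dots> \<le> real d * (real d * b)"
  proof (intro mult_right_mono)
    have "(\<Sum>e | poly q e = 0. order e q) \<le> degree q" by (rule sum_order_le_degree[OF q0])
    also have "degree q = d" using degree_monic_char_poly[OF M'C] unfolding q_def by auto
    finally show "(\<Sum>e\<in>{e. poly q e = 0}. real (order e q)) \<le> real d"
      unfolding of_nat_sum[symmetric] of_nat_le_iff .
  qed (use b0 in auto)
  finally show ?thesis by simp
qed

definition xv :: "nat \<Rightarrow> nat \<Rightarrow> real \<Rightarrow> (nat \<Rightarrow> real) \<Rightarrow> nat \<Rightarrow> real" where
  "xv n d c s = (\<lambda>i. if i < d then c * s i else if i < 2*n-1 then -1 else 0)"

lemma xv_norm:
  assumes "d \<le> 2*n-1" and s: "\<And>i. \<bar>s i\<bar> = 1"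
  shows "euclid_norm (2*n-1) (xv n d c s) = sqrt (real d * c^2 + real (2*n-1-d))"
proof -
  have "(\<Sum>i<2*n-1. (xv n d c s i)^2) = (\<Sum>i<d. (xv n d c s i)^2) + (\<Sum>i\<in>{d..<2*n-1}. (xv n d c s i)^2)"
    using assms(1) by (metis atLeast0LessThan le0 sum.atLeastLessThan_concat)
  also have "(\<Sum>i<d. (xv n d c s i)^2) = (\<Sum>i<d. c^2)"
  proof (rule sum.cong)
    fix i assume "i \<in> {..<d}"
    then have "xv n d c s i ^ 2 = c^2 * (s i)^2" by (simp add: xv_def power_mult_distrib)
    also have "(s i)^2 = 1" using s[of i] by (metis abs_power2 power2_abs power_one)
    finally show "xv n d c s i ^ 2 = c^2" by simp
  qed simp
  also have "(\<Sum>i\<in>{d..<2*n-1}. (xv n d c s i)^2) = (\<Sum>i\<in>{d..<2*n-1}. 1)"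
    by (rule sum.cong) (auto simp: xv_def)
  finally show ?thesis unfolding euclid_norm_def by simp
qed

lemma xv_mem:
  fixes n d :: nat and c :: real
  assumes n: "n \<ge> 2" and d: "d \<ge> 1" "real d * real d \<le> real n"
    and c: "c = real n / (real d * real d) - 1" "c \<ge> 0"
    and s: "\<And>i. \<bar>s i\<bar> = 1"
  shows "(\<lambda>i. xv n d c s i / euclid_norm (2*n-1) (xv n d c s)) \<in> descent_set n"
proof -
  have dn: "d \<le> n"
  proof -
    have "real d \<le> real d * real d" using d(1) by (simp add: mult_le_cancel_left1)
    with d(2) have "real d \<le> real n" by linarith
    thus ?thesis by simp
  qed
  define y where "y = (\<lambda>i. if i < d then 1 + c * s i else 0)"
  have hy: "(\<lambda>i. ones_impulse n i + xv n d c s i) = y"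
    using dn n by (intro ext) (auto simp: y_def xv_def ones_impulse_def)
  have yb: "\<bar>y i\<bar> \<le> 1 + c" for i
  proof -
    have "\<bar>1 + c * s i\<bar> \<le> 1 + \<bar>c * s i\<bar>" using abs_triangle_ineq[of 1 "c * s i"] by simp
    also have "\<bar>c * s i\<bar> = c" using s[of i] c(2) by (simp add: abs_mult)
    finally show ?thesis using c(2) by (simp add: y_def)
  qed
  have "nuclear_norm (hankel n y) \<le> real d * real d * (1 + c)"
    by (rule nn_upper[OF dn _ yb]) (auto simp: y_def)
  also have "real d * real d * (1 + c) = real n" using c(1) d(1) by simp
  also have "real n = nuclear_norm (hankel n (ones_impulse n))" using nn_ones[OF n] by simp
  finally have nn: "nuclear_norm (hankel n (\<lambda>i. ones_impulse n i + xv n d c s i)) \<le> nuclear_norm (hankel n (ones_impulse n))"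
    unfolding hy .
  have ne: "xv n d c s \<noteq> (\<lambda>_. 0)"
  proof
    assume "xv n d c s = (\<lambda>_. 0)"
    hence "xv n d c s (2*n-2) = 0" by simp
    moreover have "\<not> 2*n-2 < d" using dn n by auto
    ultimately show False using n by (simp add: xv_def split: if_splits)
  qed
  have z: "\<forall>i\<ge>2*n - 1. xv n d c s i = 0" using dn n by (auto simp: xv_def)
  show ?thesis unfolding descent_set_def using nn ne z by blast
qed

definition Lf :: "nat \<Rightarrow> (nat \<Rightarrow> real) \<Rightarrow> (nat \<Rightarrow> real) \<Rightarrow> real" where
  "Lf m \<gamma> g = (\<Sum>i<m. \<gamma> i * g i)"

definition Fs :: "nat \<Rightarrow> (nat \<Rightarrow> real) set \<Rightarrow> (nat \<Rightarrow> real) \<Rightarrow> real" where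
  "Fs m S g = (SUP \<gamma>\<in>S. Lf m \<gamma> g)"

definition Dst :: "nat \<Rightarrow> (nat \<Rightarrow> real) \<Rightarrow> (nat \<Rightarrow> real) \<Rightarrow> real" where
  "Dst m g q = (\<Sum>i<m. \<bar>g i - q i\<bar>)"

locale bset =
  fixes m :: nat and S :: "(nat \<Rightarrow> real) set"
  assumes ne: "S \<noteq> {}" and bnd: "\<And>\<gamma> i. \<gamma> \<in> S \<Longrightarrow> i < m \<Longrightarrow> \<bar>\<gamma> i\<bar> \<le> 1"
begin

lemma L_le: "\<gamma> \<in> S \<Longrightarrow> Lf m \<gamma> g - Lf m \<gamma> g' \<le> Dst m g g'"
proof -
  assume g: "\<gamma> \<in> S"
  have "Lf m \<gamma> g - Lf m \<gamma> g' = (\<Sum>i<m. \<gamma> i * (g i - g' i))"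
    unfolding Lf_def by (simp add: sum_subtractf[symmetric] algebra_simps)
  also have "\<dots> \<le> (\<Sum>i<m. \<bar>g i - g' i\<bar>)"
  proof (rule sum_mono)
    fix i assume "i \<in> {..<m}"
    then have "\<bar>\<gamma> i\<bar> \<le> 1" using bnd g by auto
    then have "\<bar>\<gamma> i * (g i - g' i)\<bar> \<le> \<bar>g i - g' i\<bar>"
      by (simp add: abs_mult mult_left_le_one_le)
    then show "\<gamma> i * (g i - g' i) \<le> \<bar>g i - g' i\<bar>" by linarith
  qed
  finally show ?thesis unfolding Dst_def .
qed

lemma L_abs: "\<gamma> \<in> S \<Longrightarrow> \<bar>Lf m \<gamma> g\<bar> \<le> (\<Sum>i<m. \<bar>g i\<bar>)"
  using L_le[of \<gamma> g "\<lambda>_. 0"] L_le[of \<gamma> "\<lambda>_. 0" g] by (simp add: Lf_def Dst_def abs_minus_commute)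

lemma bdd: "bdd_above ((\<lambda>\<gamma>. Lf m \<gamma> g) ` S)"
  using L_abs by (intro bdd_aboveI2[of _ _ "\<Sum>i<m. \<bar>g i\<bar>"]) (auto simp: abs_le_iff)

lemma F_upper: "\<gamma> \<in> S \<Longrightarrow> Lf m \<gamma> g \<le> Fs m S g"
  unfolding Fs_def by (rule cSUP_upper[OF _ bdd])

lemma F_abs: "\<bar>Fs m S g\<bar> \<le> (\<Sum>i<m. \<bar>g i\<bar>)"
proof -
  obtain \<gamma> where g: "\<gamma> \<in> S" using ne by auto
  have "Fs m S g \<le> (\<Sum>i<m. \<bar>g i\<bar>)"
    unfolding Fs_def using L_abs ne by (intro cSUP_least) (auto simp: abs_le_iff)
  moreover have "- (\<Sum>i<m. \<bar>g i\<bar>) \<le> Fs m S g"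
    using F_upper[OF g, of g] L_abs[OF g, of g] by linarith
  ultimately show ?thesis by linarith
qed

lemma F_lip: "Fs m S g \<le> Fs m S g' + Dst m g g'"
proof -
  have "Fs m S g \<le> Fs m S g' + Dst m g g'"
    unfolding Fs_def[of m S g]
  proof (rule cSUP_least[OF ne])
    fix \<gamma> assume g: "\<gamma> \<in> S"
    show "Lf m \<gamma> g \<le> Fs m S g' + Dst m g g'" using L_le[OF g, of g g'] F_upper[OF g, of g'] by linarith
  qed
  then show ?thesis .
qed

definition Qs where "Qs = PiE {..<m} (\<lambda>_. \<rat>)"

lemma Qs_countable: "countable Qs"
  unfolding Qs_def by (intro countable_PiE) (auto simp: countable_rat)

lemma Qs_ne: "Qs \<noteq> {}"
proof -
  have "restrict (\<lambda>_. 0) {..<m} \<in> Qs" unfolding Qs_def by auto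
  then show ?thesis by auto
qed

lemma approx: assumes e: "e > 0" shows "\<exists>q\<in>Qs. Dst m g q < e"
proof (cases "m = 0")
  case True
  then show ?thesis using Qs_ne e by (auto simp: Dst_def)
next
  case False
  have "\<forall>i. \<exists>r. r \<in> \<rat> \<and> \<bar>g i - r\<bar> < e / m"
  proof
    fix i
    have "g i - e / m < g i + e / m" using e False by simp
    then obtain r where "r \<in> \<rat>" "g i - e / m < r" "r < g i + e / m" using Rats_dense_in_real by blast
    then show "\<exists>r. r \<in> \<rat> \<and> \<bar>g i - r\<bar> < e / m" by (intro exI[of _ r]) (simp add: abs_less_iff)
  qed
  then obtain r where r: "\<And>i. r i \<in> \<rat>" "\<And>i. \<bar>g i - r i\<bar> < e / m"
    by metis
  define q where "q = restrict r {..<m}"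
  have "q \<in> Qs" unfolding q_def Qs_def using r(1) by auto
  moreover have "Dst m g q < (\<Sum>i<m. e / m)"
    unfolding Dst_def q_def using False r(2) by (intro sum_strict_mono) auto
  moreover have "(\<Sum>i<m. e / m) = e" using False by simp
  ultimately show ?thesis by auto
qed

lemma F_countable: "Fs m S g = (SUP q\<in>Qs. Fs m S q - Dst m g q)"
proof -
  have bddQ: "bdd_above ((\<lambda>q. Fs m S q - Dst m g q) ` Qs)"
  proof (rule bdd_aboveI2)
    fix q
    have "Dst m q g = Dst m g q" unfolding Dst_def by (simp add: abs_minus_commute)
    then show "Fs m S q - Dst m g q \<le> Fs m S g" using F_lip[of q g] by linarith
  qed
  have le: "(SUP q\<in>Qs. Fs m S q - Dst m g q) \<le> Fs m S g"
  proof (rule cSUP_least[OF Qs_ne])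
    fix q
    have "Dst m q g = Dst m g q" unfolding Dst_def by (simp add: abs_minus_commute)
    then show "Fs m S q - Dst m g q \<le> Fs m S g" using F_lip[of q g] by linarith
  qed
  define sq where "sq = (SUP q\<in>Qs. Fs m S q - Dst m g q)"
  have ge: "Fs m S g \<le> sq"
  proof (rule ccontr)
    assume "\<not> ?thesis"
    then have lt: "sq < Fs m S g" by simp
    define e where "e = Fs m S g - sq"
    have e: "e > 0" using lt unfolding e_def by simp
    obtain q where q: "q \<in> Qs" "Dst m g q < e / 2" using approx[of "e/2"] e by auto
    have A: "Fs m S g \<le> Fs m S q + Dst m g q" by (rule F_lip)
    have B: "Fs m S q - Dst m g q \<le> sq"
      unfolding sq_def by (rule cSUP_upper[OF q(1) bddQ])
    have "e = Fs m S g - sq" by (fact e_def)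
    define a where "a = Fs m S g"
    define b where "b = Fs m S q"
    define dd where "dd = Dst m g q"
    have "a \<le> b + dd" "b - dd \<le> sq" "dd < e / 2" "e = a - sq"
      using A B q(2) \<open>e = Fs m S g - sq\<close> unfolding a_def b_def dd_def by auto
    then show False by linarith
  qed
  show ?thesis using antisym[OF ge[unfolded sq_def] le] .
qed

lemma F_meas: "Fs m S \<in> borel_measurable (PiM {..<m} (\<lambda>_. density lborel std_normal_density))"
proof -
  have eq: "Fs m S = (\<lambda>g. SUP q\<in>Qs. Fs m S q - Dst m g q)"
    by (rule ext) (rule F_countable)
  have bddQ: "bdd_above ((\<lambda>q. Fs m S q - Dst m g q) ` Qs)" for g
  proof (rule bdd_aboveI2)
    fix q
    have "Dst m q g = Dst m g q" unfolding Dst_def by (simp add: abs_minus_commute)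
    then show "Fs m S q - Dst m g q \<le> Fs m S g" using F_lip[of q g] by linarith
  qed
  have R: "(\<lambda>g. SUP q\<in>Qs. Fs m S q - Dst m g q) \<in> borel_measurable (PiM {..<m} (\<lambda>_. density lborel std_normal_density))"
  proof (rule borel_measurable_cSUP[OF Qs_countable _ bddQ])
    fix q
    show "(\<lambda>g. Fs m S q - Dst m g q) \<in> borel_measurable (PiM {..<m} (\<lambda>_. density lborel std_normal_density))"
      unfolding Dst_def by measurable
  qed
  show ?thesis by (subst eq) (rule R)
qed

end

lemma t_facts:
  fixes n :: nat
  assumes n: "real n \<ge> 8"
  defines "t \<equiv> real n powr (1/3)"
  shows "t ^ 3 = real n" "t \<ge> 2" "t ^ 2 = real n powr (1/6) * sqrt (real n)"
proof -
  have n0: "real n > 0" using n by simp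
  show t3: "t ^ 3 = real n" unfolding t_def using n0
    by (simp add: powr_realpow[symmetric] powr_powr)
  have "(8::real) powr (1/3) = 2"
  proof -
    have "(8::real) = 2 powr 3" by simp
    then show ?thesis by (simp add: powr_powr)
  qed
  moreover have "(8::real) powr (1/3) \<le> t" unfolding t_def using n by (intro powr_mono2) auto
  ultimately show "t \<ge> 2" by simp
  have "t ^ 2 = real n powr (2/3)" unfolding t_def using n0
    by (simp add: powr_realpow[symmetric] powr_powr)
  also have "\<dots> = real n powr (1/6) * real n powr (1/2)" using n0 by (simp add: powr_add[symmetric])
  also have "real n powr (1/2) = sqrt (real n)" using n0 by (simp add: powr_half_sqrt)
  finally show "t ^ 2 = real n powr (1/6) * sqrt (real n)" .
qed


lemma arith_main:
  fixes n :: nat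
  assumes n: "real n \<ge> 8"
  defines "t \<equiv> real n powr (1/3)"
  defines "d \<equiv> nat \<lfloor>t\<rfloor>"
  defines "c \<equiv> real n / (real d * real d) - 1"
  shows "d \<ge> 1" "real d * real d \<le> real n" "c \<ge> 0"
    "real n powr (1/6) / 40 \<le> c * (real d * sqrt (2/pi)) / sqrt (real d * c^2 + real (2*n-1-d))"
proof -
  note tf = t_facts[OF n, folded t_def]
  have t2: "t \<ge> 2" by (rule tf(2))
  have fl: "real_of_int \<lfloor>t\<rfloor> \<le> t" "t < real_of_int \<lfloor>t\<rfloor> + 1" by linarith+
  have fl2: "\<lfloor>t\<rfloor> \<ge> 2" using t2 by linarith
  have rd: "real d = real_of_int \<lfloor>t\<rfloor>" unfolding d_def using fl2 by simp
  have d2: "real d \<ge> 2" using fl2 rd by simp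
  then show "d \<ge> 1" by simp
  have dt: "real d \<le> t" "t < real d + 1" using fl rd by auto
  have dt2: "t / 2 \<le> real d" using dt d2 by linarith
  have n3: "real n = t * t * t" using tf(1) by (simp add: power3_eq_cube)
  have "real d * real d \<le> t * t" using dt d2 by (intro mult_mono) auto
  also have "\<dots> \<le> t * t * t" using t2 by (simp add: mult_le_cancel_left1)
  finally show dd: "real d * real d \<le> real n" using n3 by simp
  have dpos: "real d * real d > 0" using d2 by simp
  have "real n / (real d * real d) \<ge> t"
  proof -
    have "t * (real d * real d) \<le> t * (t * t)" using \<open>real d * real d \<le> t * t\<close> t2 by (intro mult_left_mono) auto
    then show ?thesis using dpos n3 by (simp add: divide_simps mult_ac)
  qed
  then have cl: "c \<ge> t / 2" unfolding c_def using t2 by linarith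
  then show "c \<ge> 0" using t2 by linarith
  have cu: "c \<le> 4 * t"
  proof -
    have "t * t / 4 \<le> real d * real d" using dt2 t2 mult_mono[OF dt2 dt2] by auto
    then have "real n / (real d * real d) \<le> real n / (t * t / 4)"
      using t2 n dpos by (intro divide_left_mono) auto
    also have "\<dots> = 4 * t" using n3 t2 by (simp add: divide_simps)
    finally show ?thesis unfolding c_def by linarith
  qed
  have c0: "c \<ge> 0" using cl t2 by linarith
  have "real d * c^2 \<le> t * (4 * t)^2"
    using dt c0 cu t2 by (intro mult_mono power_mono) auto
  also have "\<dots> = 16 * real n" using n3 by (simp add: power2_eq_square)
  finally have dc: "real d * c^2 \<le> 16 * real n" .
  have "real (2*n-1-d) \<le> 2 * real n" by simp
  with dc have N2: "real d * c^2 + real (2*n-1-d) \<le> 25 * real n" by linarith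
  have Npos: "real d * c^2 + real (2*n-1-d) > 0"
  proof -
    have "c > 0" using cl t2 by linarith
    then show ?thesis using d2 by (intro add_pos_nonneg) auto
  qed
  have Nle: "sqrt (real d * c^2 + real (2*n-1-d)) \<le> 5 * sqrt (real n)"
  proof -
    have "sqrt (real d * c^2 + real (2*n-1-d)) \<le> sqrt (25 * real n)" using N2 by (rule real_sqrt_le_mono)
    also have "sqrt (25 * real n) = 5 * sqrt (real n)" by (simp add: real_sqrt_mult)
    finally show ?thesis .
  qed
  have sp: "sqrt (2/pi) \<ge> 1/2"
  proof -
    have "1/4 \<le> 2/pi" using pi_less_4 pi_gt_zero by (simp add: divide_simps)
    then have "sqrt (1/4) \<le> sqrt (2/pi)" by (rule real_sqrt_le_mono)
    moreover have "sqrt (1/4 :: real) = 1/2" by (simp add: real_sqrt_divide)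
    ultimately show ?thesis by simp
  qed
  have cd: "c * real d \<ge> t * t / 4" using mult_mono[OF cl dt2] t2 c0 by auto
  have num: "c * (real d * sqrt (2/pi)) \<ge> t * t / 8"
  proof -
    have "c * (real d * sqrt (2/pi)) = (c * real d) * sqrt (2/pi)" by simp
    also have "\<dots> \<ge> (t * t / 4) * (1/2)" using cd sp t2 c0 d2 by (intro mult_mono) auto
    finally show ?thesis by simp
  qed
  have sn: "sqrt (real n) > 0" using n by simp
  have "real n powr (1/6) / 40 = (t * t / 8) / (5 * sqrt (real n))"
    using tf(3) sn by (simp add: power2_eq_square divide_simps)
  also have "\<dots> \<le> c * (real d * sqrt (2/pi)) / (5 * sqrt (real n))"
    using num sn by (intro divide_right_mono) auto
  also have "\<dots> \<le> c * (real d * sqrt (2/pi)) / sqrt (real d * c^2 + real (2*n-1-d))"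
    using Nle Npos num t2 c0 d2 sn by (intro divide_left_mono mult_nonneg_nonneg mult_pos_pos) auto
  finally show "real n powr (1/6) / 40 \<le> c * (real d * sqrt (2/pi)) / sqrt (real d * c^2 + real (2*n-1-d))" .
qed


lemma comp_hbi:
  fixes f :: "real \<Rightarrow> real"
  assumes f[measurable]: "f \<in> borel_measurable borel" and i: "i < m"
    and h: "has_bochner_integral lborel (\<lambda>x. std_normal_density x * f x) v"
  shows "has_bochner_integral (gauss_measure m) (\<lambda>g. f (g i)) v"
proof -
  let ?N = "density lborel std_normal_density"
  have hN: "has_bochner_integral ?N f v"
    by (rule has_bochner_integral_density) (use h in \<open>auto simp: normal_density_nonneg\<close>)
  have D: "distr (gauss_measure m) ?N (\<lambda>\<omega>. \<omega> i) = ?N"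
    unfolding gauss_measure_def by (rule distr_PiM_component) (use i prob_space_normal_density in auto)
  have meas: "(\<lambda>\<omega>. \<omega> i) \<in> measurable (gauss_measure m) ?N"
    unfolding gauss_measure_def using i by (intro measurable_component_singleton) auto
  have fN: "f \<in> borel_measurable ?N" by simp
  have int: "integrable ?N f" "integral\<^sup>L ?N f = v" using hN by (auto simp: has_bochner_integral_iff)
  have "integrable (gauss_measure m) (\<lambda>g. f (g i))"
    using int(1) integrable_distr_eq[OF meas fN] D by simp
  moreover have "integral\<^sup>L (gauss_measure m) (\<lambda>g. f (g i)) = v"
    using int(2) integral_distr[OF meas fN] D by simp
  ultimately show ?thesis by (simp add: has_bochner_integral_iff)
qed

lemma comp_abs: "i < m \<Longrightarrow> has_bochner_integral (gauss_measure m) (\<lambda>g. \<bar>g i\<bar>) (sqrt (2/pi))"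
  using comp_hbi[of abs i m "sqrt (2/pi)"] std_normal_moment_abs_odd[of 0] by simp

lemma comp_id: "i < m \<Longrightarrow> has_bochner_integral (gauss_measure m) (\<lambda>g. g i) 0"
  using comp_hbi[of "\<lambda>x. x" i m 0] std_normal_moment_odd[of 0] by simp


lemma desc_bnd:
  assumes "\<gamma> \<in> descent_set n" "i < 2*n-1"
  shows "\<bar>\<gamma> i\<bar> \<le> 1"
proof -
  obtain x where x: "\<gamma> = (\<lambda>i. x i / euclid_norm (2*n-1) x)"
    using assms(1) unfolding descent_set_def by blast
  have "(x i)^2 \<le> (\<Sum>j<2*n-1. (x j)^2)"
    using assms(2) by (intro member_le_sum) auto
  then have "sqrt ((x i)^2) \<le> euclid_norm (2*n-1) x"
    unfolding euclid_norm_def by (rule real_sqrt_le_mono)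
  then have le: "\<bar>x i\<bar> \<le> euclid_norm (2*n-1) x" by simp
  show ?thesis
  proof (cases "euclid_norm (2*n-1) x = 0")
    case True then show ?thesis unfolding x by simp
  next
    case False
    then have "euclid_norm (2*n-1) x > 0" using le by linarith
    then have "\<bar>x i\<bar> / euclid_norm (2*n-1) x \<le> 1" using le by simp
    moreover have "\<bar>x i / euclid_norm (2*n-1) x\<bar> = \<bar>x i\<bar> / euclid_norm (2*n-1) x"
      using \<open>euclid_norm (2*n-1) x > 0\<close> by (simp add: abs_divide)
    ultimately have "\<bar>x i / euclid_norm (2*n-1) x\<bar> \<le> 1" by linarith
    then show ?thesis unfolding x .
  qed
qed

theorem theorem2:
  shows "\<exists>C>0. \<exists>N. \<forall>n\<ge>N.
           gaussian_width (2*n - 1) (descent_set n) \<ge> C * real n powr (1/6)"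
proof (intro exI[of _ "1/40"] conjI exI[of _ "8::nat"] allI impI)
  fix n :: nat assume n8: "n \<ge> 8"
  then have n: "real n \<ge> 8" by simp
  define t where "t = real n powr (1/3)"
  define d where "d = nat \<lfloor>t\<rfloor>"
  define c where "c = real n / (real d * real d) - 1"
  define m where "m = 2*n-1"
  define S where "S = descent_set n"
  define Nrm where "Nrm = sqrt (real d * c^2 + real (2*n-1-d))"
  note A = arith_main[OF n, folded t_def, folded d_def, folded c_def, folded Nrm_def]
  have dn: "d \<le> n"
  proof -
    have "real d \<le> real d * real d" using A(1) by (simp add: mult_le_cancel_left1)
    with A(2) have "real d \<le> real n" by linarith
    thus ?thesis by simp
  qed
  have n2: "n \<ge> 2" using n8 by simp
  have mem: "(\<lambda>i. xv n d c s i / Nrm) \<in> S" if s: "\<And>i. \<bar>s i\<bar> = 1" for s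
  proof -
    have "euclid_norm (2*n-1) (xv n d c s) = Nrm"
      unfolding Nrm_def by (rule xv_norm) (use dn n2 s in auto)
    with xv_mem[where s=s, OF n2 A(1) A(2) c_def A(3) s] show ?thesis unfolding S_def by simp
  qed
  interpret bset m S
  proof
    show "S \<noteq> {}" using mem[of "\<lambda>_. 1"] by auto
    show "\<bar>\<gamma> i\<bar> \<le> 1" if "\<gamma> \<in> S" "i < m" for \<gamma> i
      using desc_bnd that unfolding S_def m_def by blast
  qed
  define G where "G = (\<lambda>g::nat\<Rightarrow>real. (c * (\<Sum>i<d. \<bar>g i\<bar>) - (\<Sum>i\<in>{d..<m}. g i)) / Nrm)"
  have dm: "d \<le> m" using dn n2 unfolding m_def by simp
  have hG: "has_bochner_integral (gauss_measure m) G (c * (real d * sqrt (2/pi)) / Nrm)"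
  proof -
    have h1: "has_bochner_integral (gauss_measure m) (\<lambda>g. \<Sum>i<d. \<bar>g i\<bar>) (\<Sum>i<d. sqrt (2/pi))"
      by (rule has_bochner_integral_sum) (use comp_abs dm in auto)
    have h2: "has_bochner_integral (gauss_measure m) (\<lambda>g. \<Sum>i\<in>{d..<m}. g i) (\<Sum>i\<in>{d..<m}. 0)"
      by (rule has_bochner_integral_sum) (use comp_id in auto)
    have "has_bochner_integral (gauss_measure m) (\<lambda>g. (c * (\<Sum>i<d. \<bar>g i\<bar>) - (\<Sum>i\<in>{d..<m}. g i)) / Nrm)
       ((c * (\<Sum>i<d. sqrt (2/pi)) - (\<Sum>i\<in>{d..<m}. 0)) / Nrm)"
      by (intro has_bochner_integral_divide_zero has_bochner_integral_diff has_bochner_integral_mult_right h1 h2)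
    then show ?thesis unfolding G_def by simp
  qed
  have GF: "G g \<le> Fs m S g" for g
  proof -
    define s where "s = (\<lambda>i. if g i \<ge> 0 then 1 else (-1::real))"
    have s1: "\<bar>s i\<bar> = 1" for i unfolding s_def by auto
    have "Lf m (\<lambda>i. xv n d c s i / Nrm) g = G g"
    proof -
      have "Lf m (\<lambda>i. xv n d c s i / Nrm) g = (\<Sum>i<m. xv n d c s i * g i) / Nrm"
        unfolding Lf_def by (simp add: sum_divide_distrib)
      also have "(\<Sum>i<m. xv n d c s i * g i) = (\<Sum>i<d. xv n d c s i * g i) + (\<Sum>i\<in>{d..<m}. xv n d c s i * g i)"
        using dm by (metis atLeast0LessThan le0 sum.atLeastLessThan_concat)
      also have "(\<Sum>i<d. xv n d c s i * g i) = c * (\<Sum>i<d. \<bar>g i\<bar>)"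
        unfolding sum_distrib_left by (rule sum.cong) (auto simp: xv_def s_def)
      also have "(\<Sum>i\<in>{d..<m}. xv n d c s i * g i) = - (\<Sum>i\<in>{d..<m}. g i)"
        unfolding sum_negf[symmetric] by (rule sum.cong) (auto simp: xv_def m_def)
      finally show ?thesis unfolding G_def by simp
    qed
    then show ?thesis using F_upper[OF mem[where s=s, OF s1], of g] by linarith
  qed
  have intF: "integrable (gauss_measure m) (Fs m S)"
  proof (rule Bochner_Integration.integrable_bound[where f="\<lambda>g. \<Sum>i<m. \<bar>g i\<bar>"])
    show "integrable (gauss_measure m) (\<lambda>g. \<Sum>i<m. \<bar>g i\<bar>)"
      using has_bochner_integral_sum[of "{..<m}" "gauss_measure m" "\<lambda>i g. \<bar>g i\<bar>" "\<lambda>_. sqrt (2/pi)"] comp_abs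
      by (auto simp: has_bochner_integral_iff)
    show "Fs m S \<in> borel_measurable (gauss_measure m)"
      using F_meas unfolding gauss_measure_def .
    show "AE x in gauss_measure m. norm (Fs m S x) \<le> norm (\<Sum>i<m. \<bar>x i\<bar>)"
      using F_abs by (auto intro!: AE_I2)
  qed
  have "c * (real d * sqrt (2/pi)) / Nrm = integral\<^sup>L (gauss_measure m) G"
    using hG by (simp add: has_bochner_integral_iff)
  also have "\<dots> \<le> integral\<^sup>L (gauss_measure m) (Fs m S)"
    using hG intF GF by (intro integral_mono) (auto simp: has_bochner_integral_iff)
  also have "\<dots> = gaussian_width (2*n-1) (descent_set n)"
    unfolding gaussian_width_def Fs_def Lf_def m_def S_def ..
  finally have W: "c * (real d * sqrt (2/pi)) / Nrm \<le> gaussian_width (2*n-1) (descent_set n)" .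
  show "1/40 * real n powr (1/6) \<le> gaussian_width (2*n-1) (descent_set n)"
    using W A(4) by linarith
qed simp

end
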